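(* Let $G=\langle b\rangle\wr\langle a\rangle$ be the restricted wreath product of two infinite cyclic groups $\langle b\rangle\cong\langle a\rangle\cong\mathbb Z$ (so $G\cong\mathbb Z\wr\mathbb Z$). Then the bijection $f\colon\{a^n\mid n\in\mathbb N\}\to\mathbb N$, $a^n\mapsto n$, is an interpretation with parameters of $(\mathbb N,+,\times)$ in the group $(G,\cdot)$.
   Context: The restricted wreath product $\langle b\rangle\wr\langle a\rangle$ is the group $H\rtimes\langle a\rangle$ where $H$ is the free abelian group with basis $(a^{-k}ba^k)_{k\in\mathbb Z}$ and $a$ acts by conjugation shifting the basis. Groups are first-order structures in the language with one binary function symbol. An interpretation with parameters of $M$ in $N$ is a pair $(n,f)$, $f$ a surjection from a subset of $N^n$ onto $M$, such that for every $X\subseteq M^k$ definable in $M$ without parameters, the preimage of $X$ under the coordinatewise map $f^{\underline k}$ is definable in $N$ with parameters (equivalently: domain, kernel of $f$ and preimages of graphs of the basic operations of $M$ are definable with parameters). *)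

theory Defs
  imports Main "HOL-Algebra.Group"
begin

text \<open>Elements are pairs (h, n) standing for h * a^n, where h : int => int is a finitely
  supported function giving the exponents of the basis elements e_k = a^(-k) b a^k of H.
  Conjugation a^n e_k a^(-n) = e_(k-n), hence
  (h, n) * (h', m) = (\<lambda>j. h j + h' (j + n), n + m).\<close>

definition wr_ZZ :: "((int \<Rightarrow> int) \<times> int) monoid" where
  "wr_ZZ = \<lparr> carrier = {(h, n). finite {j. h j \<noteq> 0}},
             mult = (\<lambda>(h, n) (h', m). (\<lambda>j. h j + h' (j + n), n + m)),
             one = (\<lambda>_. 0, 0) \<rparr>"

definition wr_a :: "(int \<Rightarrow> int) \<times> int" where
  "wr_a = (\<lambda>_. 0, 1)"

definition wr_b :: "(int \<Rightarrow> int) \<times> int" where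
  "wr_b = (\<lambda>j. if j = 0 then 1 else 0, 0)"

datatype gterm = GVar nat | GMul gterm gterm

datatype gform = GEq gterm gterm | GNeg gform | GConj gform gform | GEx nat gform

fun geval :: "('a \<Rightarrow> 'a \<Rightarrow> 'a) \<Rightarrow> (nat \<Rightarrow> 'a) \<Rightarrow> gterm \<Rightarrow> 'a" where
  "geval m e (GVar i) = e i"
| "geval m e (GMul s t) = m (geval m e s) (geval m e t)"

fun gsat :: "'a set \<Rightarrow> ('a \<Rightarrow> 'a \<Rightarrow> 'a) \<Rightarrow> (nat \<Rightarrow> 'a) \<Rightarrow> gform \<Rightarrow> bool" where
  "gsat U m e (GEq s t) = (geval m e s = geval m e t)"
| "gsat U m e (GNeg \<phi>) = (\<not> gsat U m e \<phi>)"
| "gsat U m e (GConj \<phi> \<psi>) = (gsat U m e \<phi> \<and> gsat U m e \<psi>)"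
| "gsat U m e (GEx i \<phi>) = (\<exists>x\<in>U. gsat U m (e(i := x)) \<phi>)"

definition group_definable_params :: "'a set \<Rightarrow> ('a \<Rightarrow> 'a \<Rightarrow> 'a) \<Rightarrow> nat \<Rightarrow> 'a list set \<Rightarrow> bool" where
  "group_definable_params U m k X \<longleftrightarrow>
     (\<exists>\<phi> (p :: nat \<Rightarrow> 'a). range p \<subseteq> U \<and>
        X = {xs. length xs = k \<and> set xs \<subseteq> U \<and> gsat U m (\<lambda>i. if i < k then xs ! i else p i) \<phi>})"

datatype aterm = AVar nat | APlus aterm aterm | ATimes aterm aterm

datatype aform = AEq aterm aterm | ANeg aform | AConj aform aform | AEx nat aform

fun aeval :: "(nat \<Rightarrow> nat) \<Rightarrow> aterm \<Rightarrow> nat" where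
  "aeval e (AVar i) = e i"
| "aeval e (APlus s t) = aeval e s + aeval e t"
| "aeval e (ATimes s t) = aeval e s * aeval e t"

fun asat :: "(nat \<Rightarrow> nat) \<Rightarrow> aform \<Rightarrow> bool" where
  "asat e (AEq s t) = (aeval e s = aeval e t)"
| "asat e (ANeg \<phi>) = (\<not> asat e \<phi>)"
| "asat e (AConj \<phi> \<psi>) = (asat e \<phi> \<and> asat e \<psi>)"
| "asat e (AEx i \<phi>) = (\<exists>x. asat (e(i := x)) \<phi>)"

fun avars_t :: "aterm \<Rightarrow> nat set" where
  "avars_t (AVar i) = {i}"
| "avars_t (APlus s t) = avars_t s \<union> avars_t t"
| "avars_t (ATimes s t) = avars_t s \<union> avars_t t"

fun afree :: "aform \<Rightarrow> nat set" where
  "afree (AEq s t) = avars_t s \<union> avars_t t"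
| "afree (ANeg \<phi>) = afree \<phi>"
| "afree (AConj \<phi> \<psi>) = afree \<phi> \<union> afree \<psi>"
| "afree (AEx i \<phi>) = afree \<phi> - {i}"

definition arith_definable :: "nat \<Rightarrow> nat list set \<Rightarrow> bool" where
  "arith_definable k X \<longleftrightarrow>
     (\<exists>\<phi>. afree \<phi> \<subseteq> {..<k} \<and>
        X = {xs. length xs = k \<and> asat (\<lambda>i. if i < k then xs ! i else 0) \<phi>})"

text \<open>(n, f) with domain D \<subseteq> U^n (lists of length n), f : D \<rightarrow> N surjective, such that the
  preimage under f^k of every parameter-free definable X \<subseteq> N^k is definable with
  parameters in (U, m), identifying (U^n)^k with U^(n*k) by concatenation.\<close>

definition interprets_arith_params ::
  "'a set \<Rightarrow> ('a \<Rightarrow> 'a \<Rightarrow> 'a) \<Rightarrow> nat \<Rightarrow> 'a list set \<Rightarrow> ('a list \<Rightarrow> nat) \<Rightarrow> bool" where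
  "interprets_arith_params U m n D f \<longleftrightarrow>
     D \<subseteq> {xs. length xs = n \<and> set xs \<subseteq> U} \<and>
     f ` D = UNIV \<and>
     (\<forall>k X. arith_definable k X \<longrightarrow>
        group_definable_params U m (n * k)
          {concat yss | yss. length yss = k \<and> set yss \<subseteq> D \<and> map f yss \<in> X})"

end

theory Submission
  imports Defs "HOL-Library.Infinite_Set" "HOL-Computational_Algebra.Primes"
begin

hide_const (open) Multiset.mult


lemma gm: "mult wr_ZZ (h,n) (h',m) = (\<lambda>j. h j + h' (j+n), n+m)"
  by (simp add: wr_ZZ_def)
lemma gone: "one wr_ZZ = (\<lambda>_. 0, 0)" by (simp add: wr_ZZ_def)
lemma gcar: "(h,n) \<in> carrier wr_ZZ \<longleftrightarrow> finite {j. h j \<noteq> 0}" by (simp add: wr_ZZ_def)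

definition tot :: "(int \<Rightarrow> int) \<Rightarrow> int" where "tot f = sum f {j. f j \<noteq> 0}"

lemma tot_eq: "finite S \<Longrightarrow> {j. f j \<noteq> 0} \<subseteq> S \<Longrightarrow> tot f = sum f S"
  unfolding tot_def by (rule sum.mono_neutral_left) auto

lemma fin_add: "finite {j. f j \<noteq> 0} \<Longrightarrow> finite {j. g j \<noteq> (0::int)} \<Longrightarrow> finite {j. f j + g j \<noteq> 0}"
  by (rule finite_subset[of _ "{j. f j \<noteq> 0} \<union> {j. g j \<noteq> 0}"]) auto

lemma tot_add: "finite {j. (f::int\<Rightarrow>int) j \<noteq> 0} \<Longrightarrow> finite {j. g j \<noteq> 0} \<Longrightarrow> tot (\<lambda>j. f j + g j) = tot f + tot g"
proof -
  assume a: "finite {j. f j \<noteq> 0}" "finite {j. g j \<noteq> 0}"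
  let ?S = "{j. f j \<noteq> 0} \<union> {j. g j \<noteq> 0}"
  have "tot (\<lambda>j. f j + g j) = sum (\<lambda>j. f j + g j) ?S" by (rule tot_eq) (use a in auto)
  also have "\<dots> = sum f ?S + sum g ?S" by (simp add: sum.distrib)
  also have "sum f ?S = tot f" by (rule tot_eq[symmetric]) (use a in auto)
  also have "sum g ?S = tot g" by (rule tot_eq[symmetric]) (use a in auto)
  finally show ?thesis .
qed

lemma fin_shift: "finite {j. (f::int\<Rightarrow>int) j \<noteq> 0} \<Longrightarrow> finite {j. f (j + n) \<noteq> (0::int)}"
proof -
  assume a: "finite {j. f j \<noteq> 0}"
  have "{j. f (j + n) \<noteq> 0} = (\<lambda>j. j - n) ` {j. f j \<noteq> 0}" by (auto simp: image_iff) (metis add_diff_cancel_right')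
  thus ?thesis using a by simp
qed

lemma tot_shift: "finite {j. (f::int\<Rightarrow>int) j \<noteq> 0} \<Longrightarrow> tot (\<lambda>j. f (j + n)) = tot f"
proof -
  assume a: "finite {j. f j \<noteq> 0}"
  have im: "(\<lambda>j. j + n) ` {j. f (j + n) \<noteq> 0} = {j. f j \<noteq> 0}" by (auto simp: image_iff) (metis diff_add_cancel)
  have "tot f = sum f ((\<lambda>j. j + n) ` {j. f (j + n) \<noteq> 0})" unfolding tot_def im ..
  also have "\<dots> = sum (\<lambda>j. f (j + n)) {j. f (j + n) \<noteq> 0}"
    by (subst sum.reindex) (auto simp: inj_on_def)
  finally show ?thesis unfolding tot_def by simp
qed

lemma tot_neg: "tot (\<lambda>j. - f j) = - tot f"
  unfolding tot_def by (simp add: sum_negf)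

lemma tot_cmul: "tot (\<lambda>j. c * f j) = c * tot f"
proof (cases "c = 0")
  case False
  then show ?thesis unfolding tot_def by (simp add: sum_distrib_left)
qed (simp add: tot_def)

lemma tot_delta: "tot (\<lambda>j. if j = (c::int) then x else 0) = x"
  by (subst tot_eq[of "{c}"]) auto

lemma tot_zero: "tot (\<lambda>j. 0) = 0" by (simp add: tot_def)

lemma comm_moment:
  assumes fin: "finite {j. h j \<noteq> 0}"
    and eq: "\<And>j. (if j = 0 then 1 else 0) + h (j + n) = h j + (if j + k = 0 then 1 else (0::int))"
  shows "k = n * tot h"
proof -
  have fin1: "finite {j. j * h j \<noteq> 0}" by (rule finite_subset[OF _ fin]) auto
  have fin2: "finite {j. (j - n) * h j \<noteq> 0}" by (rule finite_subset[OF _ fin]) auto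
  have fin3: "finite {j. - n * h j \<noteq> 0}" by (rule finite_subset[OF _ fin]) auto
  have "tot (\<lambda>j. j * ((if j = 0 then 1 else 0) + h (j + n))) = tot (\<lambda>j. j * (h j + (if j + k = 0 then 1 else 0)))"
    using eq by simp
  moreover have "tot (\<lambda>j. j * ((if j = 0 then 1 else 0) + h (j + n))) = tot (\<lambda>j. (j + n - n) * h (j + n))"
    by (rule arg_cong[where f=tot]) (auto simp: fun_eq_iff)
  moreover have "tot (\<lambda>j. (j + n - n) * h (j + n)) = tot (\<lambda>j. (j - n) * h j)"
    using tot_shift[OF fin2, of n] by simp
  moreover have "tot (\<lambda>j. (j - n) * h j) = tot (\<lambda>j. j * h j + (- n * h j))"
    by (rule arg_cong[where f=tot]) (auto simp: fun_eq_iff algebra_simps)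
  moreover have "tot (\<lambda>j. j * h j + (- n * h j)) = tot (\<lambda>j. j * h j) + - n * tot h"
    using tot_add[OF fin1 fin3] tot_cmul[of "-n" h] by simp
  moreover have "tot (\<lambda>j. j * (h j + (if j + k = 0 then 1 else 0))) = tot (\<lambda>j. j * h j + (if j = -k then -k else 0))"
    by (rule arg_cong[where f=tot]) (auto simp: fun_eq_iff algebra_simps)
  moreover have "\<dots> = tot (\<lambda>j. j * h j) + - k"
    using tot_add[OF fin1, of "\<lambda>j. if j = -k then -k else 0"] tot_delta[of "-k" "-k"] by simp
  ultimately show ?thesis by simp
qed


abbreviation gmul (infixl "\<cdot>" 70) where "x \<cdot> y \<equiv> mult wr_ZZ x y"

definition d0 :: "int \<Rightarrow> int" where "d0 j = (if j = 0 then 1 else 0)"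

lemma wa: "wr_a = (\<lambda>_. 0, 1)" by (simp add: wr_a_def)
lemma wb: "wr_b = (d0, 0)" by (simp add: wr_b_def d0_def fun_eq_iff)

lemma fin_d0: "finite {j. d0 j \<noteq> 0}" by (rule finite_subset[of _ "{0}"]) (auto simp: d0_def)
lemma tot_d0: "tot d0 = 1" using tot_delta[of 0 1] by (simp add: d0_def[abs_def])

lemma gassoc: "(x \<cdot> y) \<cdot> z = x \<cdot> (y \<cdot> z)"
  by (cases x; cases y; cases z) (simp add: gm algebra_simps)

lemma gcar_mul: "x \<in> carrier wr_ZZ \<Longrightarrow> y \<in> carrier wr_ZZ \<Longrightarrow> x \<cdot> y \<in> carrier wr_ZZ"
  by (cases x; cases y) (auto simp: gm gcar intro!: fin_add fin_shift)

lemma comm_b: "(h, n) \<cdot> wr_b = wr_b \<cdot> (h, n) \<longleftrightarrow> n = 0"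
proof -
  have "(h, n) \<cdot> wr_b = wr_b \<cdot> (h, n) \<longleftrightarrow> (\<forall>j. d0 (j + n) = d0 j)"
    by (simp add: wb gm fun_eq_iff algebra_simps)
  also have "\<dots> \<longleftrightarrow> n = 0"
    by (auto simp: d0_def)
  finally show ?thesis .
qed

lemma comm_a: assumes "(h, n) \<in> carrier wr_ZZ" shows "(h, n) \<cdot> wr_a = wr_a \<cdot> (h, n) \<longleftrightarrow> h = (\<lambda>_. 0)"
proof
  assume "(h, n) \<cdot> wr_a = wr_a \<cdot> (h, n)"
  hence per: "\<And>j. h (j + 1) = h j" by (simp add: wa gm fun_eq_iff algebra_simps)
  have c: "h j = h 0" for j
  proof (induction j rule: int_induct[where k=0])
    case base then show ?case by simp
  next
    case (step1 i) then show ?case using per[of i] by simp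
  next
    case (step2 i) then show ?case using per[of "i - 1"] by simp
  qed
  show "h = (\<lambda>_. 0)"
  proof (rule ccontr)
    assume "h \<noteq> (\<lambda>_. 0)"
    then obtain j where "h j \<noteq> 0" by auto
    hence "h x \<noteq> 0" for x using c[of x] c[of j] by simp
    hence "{j. h j \<noteq> 0} = UNIV" by auto
    thus False using assms by (simp add: gcar infinite_UNIV_int)
  qed
qed (simp add: wa gm)

lemma telescope:
  assumes fin: "finite {j. d j \<noteq> 0}" and t: "tot d = 0"
  shows "\<exists>g. finite {j. g j \<noteq> (0::int)} \<and> (\<forall>j. g j - g (j + 1) = d j)"
proof -
  obtain R where R: "abs ` {j. d j \<noteq> 0} \<subseteq> {..<R}" using fin finite_int_iff_bounded by blast
  have dz: "d j = 0" if "j < - R \<or> j > R" for j using R that by force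
  define g where "g j = sum d {j..R}" for j
  have "g j - g (j + 1) = d j" for j
  proof (cases "j \<le> R")
    case True
    have "{j..R} = insert j {j+1..R}" using True by auto
    then show ?thesis by (simp add: g_def)
  next
    case False then show ?thesis by (simp add: g_def dz)
  qed
  moreover have "finite {j. g j \<noteq> 0}"
  proof (rule finite_subset[of _ "{-R..R}"])
    show "{j. g j \<noteq> 0} \<subseteq> {-R..R}"
    proof
      fix j assume "j \<in> {j. g j \<noteq> 0}"
      hence gj: "g j \<noteq> 0" by simp
      show "j \<in> {-R..R}"
      proof (rule ccontr)
        assume "j \<notin> {-R..R}"
        then consider "j > R" | "j < -R" by force
        then show False
        proof cases
          case 1 then show ?thesis using gj by (simp add: g_def)
        next
          case 2
          have sub: "{j. d j \<noteq> 0} \<subseteq> {j..R}"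
          proof
            fix x assume "x \<in> {j. d j \<noteq> 0}"
            then have "\<not> (x < -R \<or> x > R)" using dz by auto
            then show "x \<in> {j..R}" using 2 by auto
          qed
          have "g j = sum d {j..R}" by (simp add: g_def)
          also have "\<dots> = tot d"
            by (rule tot_eq[symmetric]) (use sub in auto)
          finally show ?thesis using gj t by simp
        qed
      qed
    qed
  qed simp
  ultimately show ?thesis by blast
qed

lemma pw_props:
  assumes "x \<in> carrier wr_ZZ"
  shows "x [^]\<^bsub>wr_ZZ\<^esub> (m::nat) \<in> carrier wr_ZZ
       \<and> snd (x [^]\<^bsub>wr_ZZ\<^esub> m) = int m * snd x
       \<and> tot (fst (x [^]\<^bsub>wr_ZZ\<^esub> m)) = int m * tot (fst x)
       \<and> (x [^]\<^bsub>wr_ZZ\<^esub> m) \<cdot> x = x \<cdot> (x [^]\<^bsub>wr_ZZ\<^esub> m)"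
proof (induction m)
  case 0
  show ?case using assms by (cases x) (simp add: gone gcar gm tot_zero)
next
  case (Suc m)
  obtain h n where x: "x = (h, n)" by (cases x)
  obtain h' n' where p: "x [^]\<^bsub>wr_ZZ\<^esub> m = (h', n')" by (cases "x [^]\<^bsub>wr_ZZ\<^esub> m")
  have fh: "finite {j. h j \<noteq> 0}" using assms x by (simp add: gcar)
  have fh': "finite {j. h' j \<noteq> 0}" using Suc p by (simp add: gcar)
  have c: "x [^]\<^bsub>wr_ZZ\<^esub> Suc m \<in> carrier wr_ZZ" using Suc assms by (simp add: gcar_mul)
  have s: "snd (x [^]\<^bsub>wr_ZZ\<^esub> Suc m) = int (Suc m) * snd x" using Suc p x by (simp add: gm algebra_simps)
  have t: "tot (fst (x [^]\<^bsub>wr_ZZ\<^esub> Suc m)) = int (Suc m) * tot (fst x)"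
    using Suc p x by (simp add: gm tot_add[OF fh' fin_shift[OF fh]] tot_shift[OF fh] algebra_simps)
  have cm: "(x [^]\<^bsub>wr_ZZ\<^esub> Suc m) \<cdot> x = x \<cdot> (x [^]\<^bsub>wr_ZZ\<^esub> Suc m)"
    using Suc by (simp add: gassoc)
  show ?case using c s t cm by blast
qed


definition MulS :: "((int \<Rightarrow> int) \<times> int) \<Rightarrow> ((int \<Rightarrow> int) \<times> int) \<Rightarrow> ((int \<Rightarrow> int) \<times> int) \<Rightarrow> bool" where
"MulS x y z \<longleftrightarrow> x \<cdot> wr_a = wr_a \<cdot> x \<and> y \<cdot> wr_a = wr_a \<cdot> y \<and> z \<cdot> wr_a = wr_a \<cdot> z \<and>
  (\<exists>v\<in>carrier wr_ZZ. \<exists>w\<in>carrier wr_ZZ. \<exists>u1\<in>carrier wr_ZZ. \<exists>u2\<in>carrier wr_ZZ. \<exists>g\<in>carrier wr_ZZ.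
     v \<cdot> (wr_b \<cdot> wr_a) = (wr_b \<cdot> wr_a) \<cdot> v \<and> w \<cdot> (wr_b \<cdot> x) = (wr_b \<cdot> x) \<cdot> w \<and>
     u1 \<cdot> wr_b = wr_b \<cdot> u1 \<and> v = u1 \<cdot> y \<and> u2 \<cdot> wr_b = wr_b \<cdot> u2 \<and> w = u2 \<cdot> z \<and>
     g \<cdot> wr_b = wr_b \<cdot> g \<and> (u1 \<cdot> wr_a) \<cdot> g = (u2 \<cdot> g) \<cdot> wr_a)"

lemma comm_elem:
  assumes "(h, k) \<in> carrier wr_ZZ" "(h, k) \<cdot> (d0, n) = (d0, n) \<cdot> (h, k)"
  shows "k = n * tot h"
proof (rule comm_moment)
  show "finite {j. h j \<noteq> 0}" using assms(1) by (simp add: gcar)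
  fix j
  have "h j + d0 (j + k) = d0 j + h (j + n)" using assms(2) by (simp add: gm fun_eq_iff)
  thus "(if j = 0 then 1 else 0) + h (j + n) = h j + (if j + k = 0 then 1 else 0)" by (simp add: d0_def)
qed

lemma inCa: "x \<in> carrier wr_ZZ \<Longrightarrow> x \<cdot> wr_a = wr_a \<cdot> x \<Longrightarrow> x = (\<lambda>_. 0, snd x)"
  by (cases x) (simp add: comm_a)

lemma inH: "x \<cdot> wr_b = wr_b \<cdot> x \<Longrightarrow> snd x = 0"
  by (cases x) (simp add: comm_b)

lemma MulS_sound:
  assumes "x \<in> carrier wr_ZZ" "y \<in> carrier wr_ZZ" "z \<in> carrier wr_ZZ" "MulS x y z"
  shows "x = (\<lambda>_. 0, snd x) \<and> y = (\<lambda>_. 0, snd y) \<and> z = (\<lambda>_. 0, snd x * snd y)"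
proof -
  from assms(4) obtain v w u1 u2 g where
    ca: "x \<cdot> wr_a = wr_a \<cdot> x" "y \<cdot> wr_a = wr_a \<cdot> y" "z \<cdot> wr_a = wr_a \<cdot> z" and
    car: "v \<in> carrier wr_ZZ" "w \<in> carrier wr_ZZ" "u1 \<in> carrier wr_ZZ" "u2 \<in> carrier wr_ZZ" "g \<in> carrier wr_ZZ" and
    e: "v \<cdot> (wr_b \<cdot> wr_a) = (wr_b \<cdot> wr_a) \<cdot> v" "w \<cdot> (wr_b \<cdot> x) = (wr_b \<cdot> x) \<cdot> w"
     "u1 \<cdot> wr_b = wr_b \<cdot> u1" "v = u1 \<cdot> y" "u2 \<cdot> wr_b = wr_b \<cdot> u2" "w = u2 \<cdot> z"
     "g \<cdot> wr_b = wr_b \<cdot> g" "(u1 \<cdot> wr_a) \<cdot> g = (u2 \<cdot> g) \<cdot> wr_a"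
    unfolding MulS_def by blast
  have x: "x = (\<lambda>_. 0, snd x)" and y: "y = (\<lambda>_. 0, snd y)" and z: "z = (\<lambda>_. 0, snd z)"
    using inCa assms ca by blast+
  obtain h1 where u1: "u1 = (h1, 0)" using inH[OF e(3)] by (cases u1) auto
  obtain h2 where u2: "u2 = (h2, 0)" using inH[OF e(5)] by (cases u2) auto
  obtain hg where g: "g = (hg, 0)" using inH[OF e(7)] by (cases g) auto
  have f1: "finite {j. h1 j \<noteq> 0}" using car u1 by (simp add: gcar)
  have f2: "finite {j. h2 j \<noteq> 0}" using car u2 by (simp add: gcar)
  have fg: "finite {j. hg j \<noteq> 0}" using car g by (simp add: gcar)
  have "(h1, 0) \<cdot> (\<lambda>_. 0, snd y) = (h1, snd y)" by (simp add: gm)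
  hence v: "v = (h1, snd y)" using e(4) u1 y by metis
  have "(h2, 0) \<cdot> (\<lambda>_. 0, snd z) = (h2, snd z)" by (simp add: gm)
  hence w: "w = (h2, snd z)" using e(6) u2 z by metis
  have ba: "wr_b \<cdot> wr_a = (d0, 1)" by (simp add: wa wb gm)
  have bx: "wr_b \<cdot> x = (d0, snd x)" by (subst x) (simp add: wb gm)
  have m1: "snd y = 1 * tot h1" using comm_elem[of h1 "snd y" 1] car(1) e(1) v ba by simp
  have m2: "snd z = snd x * tot h2" using comm_elem[of h2 "snd z" "snd x"] car(2) e(2) w bx by simp
  have "(\<lambda>j. h1 j + hg (j + 1)) = (\<lambda>j. h2 j + hg j)"
    using e(8) u1 u2 g by (simp add: wa gm)
  hence "tot (\<lambda>j. h1 j + hg (j + 1)) = tot (\<lambda>j. h2 j + hg j)" by simp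
  hence "tot h1 = tot h2"
    by (simp add: tot_add[OF f1 fin_shift[OF fg]] tot_add[OF f2 fg] tot_shift[OF fg])
  thus ?thesis using x y z m1 m2 by simp
qed

lemma MulS_complete:
  "MulS (\<lambda>_. 0, n) (\<lambda>_. 0, int m) (\<lambda>_. 0, n * int m)"
proof -
  let ?x = "(\<lambda>_::int. 0::int, n)" and ?y = "(\<lambda>_::int. 0::int, int m)" and ?z = "(\<lambda>_::int. 0::int, n * int m)"
  have ba: "wr_b \<cdot> wr_a = (d0, 1)" by (simp add: wa wb gm)
  have bx: "wr_b \<cdot> ?x = (d0, n)" by (simp add: wb gm)
  have cba: "(d0, 1) \<in> carrier wr_ZZ" "(d0, n) \<in> carrier wr_ZZ" using fin_d0 by (auto simp: gcar)
  define v where "v = (d0, 1) [^]\<^bsub>wr_ZZ\<^esub> m"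
  define w where "w = (d0, n) [^]\<^bsub>wr_ZZ\<^esub> m"
  note pv = pw_props[OF cba(1), of m, folded v_def]
  note pw = pw_props[OF cba(2), of m, folded w_def]
  obtain hv where hv: "v = (hv, int m)" using pv by (cases v) auto
  obtain hw where hw: "w = (hw, n * int m)" using pw by (cases w) auto
  have fv: "finite {j. hv j \<noteq> 0}" using pv hv by (simp add: gcar)
  have fw: "finite {j. hw j \<noteq> 0}" using pw hw by (simp add: gcar)
  have tv: "tot hv = int m" using pv hv by (simp add: tot_d0)
  have tw: "tot hw = int m" using pw hw by (simp add: tot_d0)
  define d where "d = (\<lambda>j. hv j + - hw j)"
  have fd: "finite {j. d j \<noteq> 0}" unfolding d_def by (rule fin_add[OF fv]) (use fw in simp)
  have "tot d = tot hv + tot (\<lambda>j. - hw j)" unfolding d_def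
    by (rule tot_add[OF fv, of "\<lambda>j. - hw j"]) (use fw in simp)
  hence "tot d = 0" using tv tw tot_neg[of hw] by simp
  then obtain hg where fg: "finite {j. hg j \<noteq> 0}" and tel: "\<forall>j. hg j - hg (j + 1) = hv j + - hw j"
    using telescope[OF fd] unfolding d_def by blast
  have ca: "(\<lambda>_. 0, k) \<cdot> wr_a = wr_a \<cdot> (\<lambda>_. 0, k)" for k :: int by (simp add: wa gm add.commute)
  have f1: "v \<cdot> (wr_b \<cdot> wr_a) = wr_b \<cdot> wr_a \<cdot> v" using pv ba by (simp add: v_def)
  have f2: "w \<cdot> (wr_b \<cdot> ?x) = wr_b \<cdot> ?x \<cdot> w" using pw bx by (simp add: w_def)
  have f3: "(h, 0) \<cdot> wr_b = wr_b \<cdot> (h, 0)" for h by (simp add: comm_b)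
  have f4: "v = (hv, 0) \<cdot> ?y" using hv by (simp add: gm)
  have f5: "w = (hw, 0) \<cdot> ?z" using hw by (simp add: gm)
  have f6: "(hv, 0) \<cdot> wr_a \<cdot> (hg, 0) = (hw, 0) \<cdot> (hg, 0) \<cdot> wr_a"
      using tel by (simp add: wa gm fun_eq_iff algebra_simps)
  have c: "v \<in> carrier wr_ZZ" "w \<in> carrier wr_ZZ" "(hv, 0) \<in> carrier wr_ZZ" "(hw, 0) \<in> carrier wr_ZZ"
    "(hg, 0) \<in> carrier wr_ZZ" using pv pw fv fw fg by (auto simp: gcar)
  show ?thesis unfolding MulS_def
    using ca f1 f2 f3 f4 f5 f6 c by blast
qed


definition enc :: "nat \<Rightarrow> (int \<Rightarrow> int) \<times> int" where "enc n = (\<lambda>_. 0, int n)"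
definition dec :: "(int \<Rightarrow> int) \<times> int \<Rightarrow> nat" where "dec x = nat (snd x)"

lemma dec_enc[simp]: "dec (enc n) = n" by (simp add: enc_def dec_def)
lemma enc_inj[simp]: "enc a = enc b \<longleftrightarrow> a = b" by (simp add: enc_def)
lemma enc_car[simp]: "enc n \<in> carrier wr_ZZ" by (simp add: enc_def gcar)
lemma enc_mul: "enc a \<cdot> enc b = enc (a + b)" by (simp add: enc_def gm)
lemma enc_one: "(\<lambda>_. 0, 0) = enc 0" by (simp add: enc_def)
lemma apow: "wr_a [^]\<^bsub>wr_ZZ\<^esub> (n::nat) = enc n"
  by (induction n) (simp_all add: gone enc_def wa gm)

definition gcomm :: "gterm \<Rightarrow> gterm \<Rightarrow> gform" where "gcomm s t = GEq (GMul s t) (GMul t s)"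

definition MulF :: "nat \<Rightarrow> nat \<Rightarrow> nat \<Rightarrow> nat \<Rightarrow> nat \<Rightarrow> nat \<Rightarrow> gform" where
"MulF pa pb x y z F = (let A = GVar pa; B = GVar pb; X = GVar x; Y = GVar y; Z = GVar z;
   V = GVar F; W = GVar (F+1); U1 = GVar (F+2); U2 = GVar (F+3); G = GVar (F+4) in
  GConj (gcomm X A) (GConj (gcomm Y A) (GConj (gcomm Z A)
   (GEx F (GEx (F+1) (GEx (F+2) (GEx (F+3) (GEx (F+4)
     (GConj (gcomm V (GMul B A)) (GConj (gcomm W (GMul B X)) (GConj (gcomm U1 B) (GConj (GEq V (GMul U1 Y))
     (GConj (gcomm U2 B) (GConj (GEq W (GMul U2 Z)) (GConj (gcomm G B) (GEq (GMul (GMul U1 A) G) (GMul (GMul U2 G) A)))))))))))))))))"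

lemma MulF_sem:
  assumes "x < F" "y < F" "z < F" "pa < F" "pb < F" "e pa = wr_a" "e pb = wr_b"
  shows "gsat (carrier wr_ZZ) (mult wr_ZZ) e (MulF pa pb x y z F) \<longleftrightarrow> MulS (e x) (e y) (e z)"
  using assms by (simp add: MulF_def gcomm_def MulS_def Let_def)


definition s4 :: "int \<Rightarrow> bool" where "s4 n \<longleftrightarrow> (\<exists>a b c d. n = a^2 + b^2 + c^2 + d^2)"

lemma euler4:
  fixes a b c d w x y z :: int
  shows "(a^2+b^2+c^2+d^2) * (w^2+x^2+y^2+z^2) =
   (a*w+b*x+c*y+d*z)^2 + (a*x-b*w+c*z-d*y)^2 + (a*y-b*z-c*w+d*x)^2 + (a*z+b*y-c*x-d*w)^2"
  by (simp add: power2_eq_square algebra_simps)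

lemma s4_mult: assumes "s4 m" "s4 n" shows "s4 (m * n)"
proof -
  obtain a b c d where m: "m = a^2+b^2+c^2+d^2" using assms(1) s4_def by auto
  obtain w x y z where n: "n = w^2+x^2+y^2+z^2" using assms(2) s4_def by auto
  show ?thesis unfolding s4_def m n euler4 by blast
qed

lemma s4_half: assumes "s4 (2 * n)" shows "s4 n"
proof -
  obtain a b c d where e: "2 * n = a^2+b^2+c^2+d^2" using assms s4_def by auto
  have key: "s4 n" if ev1: "even (a + b)" and ev2: "even (c + d)" and ee: "2 * n = a^2+b^2+c^2+d^2" for a b c d :: int
  proof -
    obtain u where u: "a + b = 2 * u" using ev1 unfolding dvd_def by blast
    obtain v where v: "c + d = 2 * v" using ev2 unfolding dvd_def by blast
    have "n = u^2 + (u - b)^2 + v^2 + (v - d)^2"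
    proof -
      have a: "a = 2*u - b" and c: "c = 2*v - d" using u v by auto
      have "2 * n = (2*u-b)^2 + b^2 + (2*v-d)^2 + d^2" using ee unfolding a c .
      then have "2 * n = 2 * (u^2 + (u - b)^2 + v^2 + (v - d)^2)" by (simp add: power2_eq_square algebra_simps)
      then show ?thesis by simp
    qed
    then show ?thesis unfolding s4_def by blast
  qed
  have "even (a^2+b^2+c^2+d^2)" unfolding e[symmetric] by simp
  hence par: "even (a + b + c + d)" by simp
  show ?thesis
  proof (cases "even (a + b)")
    case True
    then have "even (c + d)" using par by presburger
    then show ?thesis using key[OF True _ e] by simp
  next
    case False
    show ?thesis
    proof (cases "even (a + c)")
      case True
      then have "even (b + d)" using par by presburger
      then show ?thesis using key[OF True, of b d] e by (simp add: algebra_simps)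
    next
      case F2: False
      then have "even (a + d)" using False par by presburger
      moreover have "even (b + c)" using False F2 par by presburger
      ultimately show ?thesis using key[of a d b c] e by (simp add: algebra_simps)
    qed
  qed
qed

lemma sq_inj:
  fixes p x y :: nat
  assumes p: "prime p" and x: "2 * x < p" and y: "2 * y < p" and e: "x^2 mod p = y^2 mod p"
  shows "x = y"
proof -
  have pi: "prime (int p)" using p by simp
  have "int (x^2) mod int p = int (y^2) mod int p" using e by (metis of_nat_mod)
  hence "int p dvd int (y^2) - int (x^2)" by (metis mod_eq_dvd_iff)
  moreover have "int (y^2) - int (x^2) = (int y - int x) * (int y + int x)" by (simp add: power2_eq_square algebra_simps)
  ultimately have "int p dvd (int y - int x) \<or> int p dvd (int y + int x)" using pi prime_dvd_mult_iff by metis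
  then show ?thesis
  proof
    assume d: "int p dvd (int y - int x)"
    show ?thesis
    proof (rule ccontr)
      assume "x \<noteq> y"
      hence "\<bar>int p\<bar> \<le> \<bar>int y - int x\<bar>" using dvd_imp_le_int[OF _ d] by simp
      thus False using x y by simp
    qed
  next
    assume d: "int p dvd (int y + int x)"
    show ?thesis
    proof (rule ccontr)
      assume "x \<noteq> y"
      hence "\<bar>int p\<bar> \<le> \<bar>int y + int x\<bar>" using dvd_imp_le_int[OF _ d] by simp
      thus False using x y by simp
    qed
  qed
qed

lemma prime_sq1:
  fixes p :: nat
  assumes p: "prime p" and odd: "odd p"
  shows "\<exists>x y. 2 * x < p \<and> 2 * y < p \<and> p dvd x^2 + y^2 + 1"
proof -
  define h where "h = (p - 1) div 2"
  have p1: "p > 1" using p prime_gt_1_nat by blast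
  have hp: "2 * h + 1 = p" using odd p1 unfolding h_def by presburger
  define A where "A = (\<lambda>x. x^2 mod p) ` {..h}"
  define B where "B = (\<lambda>y. p - 1 - y^2 mod p) ` {..h}"
  have ia: "inj_on (\<lambda>x. x^2 mod p) {..h}"
    by (rule inj_onI) (rule sq_inj[OF p], use hp in auto)
  have ib: "inj_on (\<lambda>y. p - 1 - y^2 mod p) {..h}"
  proof (rule inj_onI)
    fix x y assume xy: "x \<in> {..h}" "y \<in> {..h}" "p - 1 - x^2 mod p = p - 1 - y^2 mod p"
    have "x^2 mod p < p" "y^2 mod p < p" using p1 by auto
    hence "x^2 mod p = y^2 mod p" using xy(3) by linarith
    thus "x = y" by (rule sq_inj[OF p, rotated 2]) (use xy hp in auto)
  qed
  have cA: "card A = h + 1" unfolding A_def using card_image[OF ia] by simp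
  have cB: "card B = h + 1" unfolding B_def using card_image[OF ib] by simp
  have "A \<union> B \<subseteq> {..<p}" unfolding A_def B_def using p1 by auto
  hence "card (A \<union> B) \<le> p" by (metis card_lessThan card_mono finite_lessThan)
  moreover have "card (A \<union> B) + card (A \<inter> B) = card A + card B"
  proof -
    have fA: "finite A" and fB: "finite B" by (auto simp: A_def B_def)
    show ?thesis using card_Un_Int[OF fA fB] by linarith
  qed
  ultimately have "card (A \<inter> B) \<noteq> 0" using cA cB hp by linarith
  hence "A \<inter> B \<noteq> {}" by auto
  then obtain x y where xy: "x \<le> h" "y \<le> h" "x^2 mod p = p - 1 - y^2 mod p" unfolding A_def B_def by auto
  have "y^2 mod p < p" using p1 by auto
  hence "x^2 mod p + y^2 mod p + 1 = p" using xy(3) by linarith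
  hence "(x^2 + y^2 + 1) mod p = 0" by (metis mod_add_left_eq mod_add_right_eq mod_self)
  thus ?thesis using xy hp by (intro exI[of _ x] exI[of _ y]) auto
qed


lemma red_mod:
  fixes M K x :: int
  assumes "M = 2 * K + 1" "K \<ge> 0"
  shows "\<exists>t. \<bar>x - M * t\<bar> \<le> K"
proof -
  define t where "t = (x + K) div M"
  have M0: "M > 0" using assms by simp
  have d: "x + K = M * t + (x + K) mod M" unfolding t_def by simp
  have "0 \<le> (x + K) mod M" "(x + K) mod M < M" using M0 by auto
  hence "\<bar>x - M * t\<bar> \<le> K" using d assms by linarith
  thus ?thesis by blast
qed

lemma sq_le: "\<bar>y\<bar> \<le> (K::int) \<Longrightarrow> y^2 \<le> K^2"
  by (metis abs_le_square_iff abs_of_nonneg abs_ge_zero order_trans)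

lemma prime_s4:
  fixes p :: nat
  assumes p: "prime p" and odd: "odd p"
  shows "s4 (int p)"
proof -
  have p1: "p > 1" using p prime_gt_1_nat by blast
  obtain x y where xy: "2 * x < p" "2 * y < p" "p dvd x^2 + y^2 + 1" using prime_sq1[OF p odd] by blast
  define m0 where "m0 = (x^2 + y^2 + 1) div p"
  have m0p: "m0 * p = x^2 + y^2 + 1" using xy(3) unfolding m0_def by simp
  have m0pos: "m0 > 0" using m0p by (cases m0) auto
  have "x^2 + y^2 + 1 < p * p"
  proof -
    obtain q where q: "p = Suc q" using p1 by (cases p) auto
    have b1: "2*x \<le> q" and b2: "2*y \<le> q" using xy q by auto
    have "(2*x)^2 \<le> q^2" by (rule power_mono) (use b1 in auto)
    moreover have "(2*y)^2 \<le> q^2" by (rule power_mono) (use b2 in auto)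
    ultimately have "4*(x*x) \<le> q*q" "4*(y*y) \<le> q*q" by (auto simp: power2_eq_square)
    moreover have "q \<ge> 1" using p1 q by simp
    moreover have "q * q \<ge> 0" by simp
    ultimately show ?thesis unfolding q by (simp add: power2_eq_square)
  qed
  hence m0lt: "m0 < p" using m0p by (metis mult_less_cancel2)
  define P where "P m \<longleftrightarrow> 0 < m \<and> s4 (int m * int p)" for m
  have "int (m0 * p) = int (x^2 + y^2 + 1)" using m0p by simp
  hence e0: "int m0 * int p = (int x)^2 + (int y)^2 + 1^2 + 0^2" by simp
  have "s4 (int m0 * int p)" unfolding s4_def by (intro exI) (rule e0)
  hence Pm0: "P m0" unfolding P_def using m0pos by simp
  define m where "m = (LEAST m. P m)"
  have Pm: "P m" unfolding m_def by (rule LeastI[of P m0, OF Pm0])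
  have mle: "m \<le> m0" unfolding m_def by (rule Least_le[of P m0, OF Pm0])
  have mmin: "\<not> P r" if "r < m" for r using not_less_Least[of r P] that unfolding m_def by blast
  have mpos: "m > 0" and sm: "s4 (int m * int p)" using Pm P_def by auto
  have "m = 1"
  proof (rule ccontr)
    assume m1: "m \<noteq> 1"
    show False
    proof (cases "even m")
      case True
      then obtain k where k: "m = 2 * k" by (auto elim: evenE)
      have "s4 (2 * (int k * int p))" using sm k by (simp add: algebra_simps)
      hence "s4 (int k * int p)" by (rule s4_half)
      hence "P k" using k mpos unfolding P_def by simp
      thus False using mmin[of k] k mpos by simp
    next
      case False
      define M where "M = int m"
      define Pp where "Pp = int p"
      define K where "K = M div 2"
      have MK: "M = 2 * K + 1" using False unfolding M_def K_def by presburger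
      have K1: "K \<ge> 1" using MK m1 mpos unfolding M_def by linarith
      have MlP: "M < Pp" using mle m0lt unfolding M_def Pp_def by simp
      obtain x1 x2 x3 x4 where e: "M * Pp = x1^2 + x2^2 + x3^2 + x4^2" using sm unfolding s4_def M_def Pp_def by blast
      obtain t1 where t1: "\<bar>x1 - M * t1\<bar> \<le> K" using red_mod[OF MK] K1 by fastforce
      obtain t2 where t2: "\<bar>x2 - M * t2\<bar> \<le> K" using red_mod[OF MK] K1 by fastforce
      obtain t3 where t3: "\<bar>x3 - M * t3\<bar> \<le> K" using red_mod[OF MK] K1 by fastforce
      obtain t4 where t4: "\<bar>x4 - M * t4\<bar> \<le> K" using red_mod[OF MK] K1 by fastforce
      define y1 where "y1 = x1 - M * t1"
      define y2 where "y2 = x2 - M * t2"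
      define y3 where "y3 = x3 - M * t3"
      define y4 where "y4 = x4 - M * t4"
      define r where "r = Pp - 2 * (x1*t1 + x2*t2 + x3*t3 + x4*t4) + M * (t1^2 + t2^2 + t3^2 + t4^2)"
      have Sr: "y1^2 + y2^2 + y3^2 + y4^2 = M * r"
      proof -
        have "y1^2 + y2^2 + y3^2 + y4^2 = (x1^2 + x2^2 + x3^2 + x4^2) - M * (2 * (x1*t1 + x2*t2 + x3*t3 + x4*t4)) + M * (M * (t1^2 + t2^2 + t3^2 + t4^2))"
          unfolding y1_def y2_def y3_def y4_def by (simp add: power2_eq_square algebra_simps)
        also have "\<dots> = M * r" unfolding e[symmetric] r_def by (simp add: algebra_simps)
        finally show ?thesis .
      qed
      have yb: "y1^2 \<le> K^2" "y2^2 \<le> K^2" "y3^2 \<le> K^2" "y4^2 \<le> K^2"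
        using t1 t2 t3 t4 sq_le unfolding y1_def y2_def y3_def y4_def by blast+
      have "M * r < M * M"
      proof -
        have "M * M = 4 * K^2 + 4 * K + 1" using MK by (simp add: power2_eq_square algebra_simps)
        thus ?thesis using Sr yb K1 by linarith
      qed
      hence rM: "r < M" using MK K1 by (simp add: mult_less_cancel_left)
      have "0 \<le> M * r" unfolding Sr[symmetric] by simp
      hence r0: "r \<ge> 0" using MK K1 by (simp add: zero_le_mult_iff)
      show False
      proof (cases "r = 0")
        case True
        have "y1^2 + y2^2 + y3^2 + y4^2 = 0" using Sr True by simp
        hence "y1^2 = 0 \<and> y2^2 = 0 \<and> y3^2 = 0 \<and> y4^2 = 0"
          using zero_le_power2[of y1] zero_le_power2[of y2] zero_le_power2[of y3] zero_le_power2[of y4] by linarith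
        hence "y1 = 0 \<and> y2 = 0 \<and> y3 = 0 \<and> y4 = 0" by simp
        hence "x1 = M * t1" "x2 = M * t2" "x3 = M * t3" "x4 = M * t4" unfolding y1_def y2_def y3_def y4_def by auto
        hence "M * Pp = M * (M * (t1^2 + t2^2 + t3^2 + t4^2))" using e by (simp add: power2_eq_square algebra_simps)
        hence "Pp = M * (t1^2 + t2^2 + t3^2 + t4^2)" using MK K1 by simp
        hence "M dvd Pp" by simp
        hence "m dvd p" unfolding M_def Pp_def by simp
        hence "m = 1 \<or> m = p" using p prime_nat_iff by blast
        thus False using m1 MlP unfolding M_def Pp_def by simp
      next
        case False
        define E1 where "E1 = Pp - (x1*t1 + x2*t2 + x3*t3 + x4*t4)"
        define E2 where "E2 = - (x1*t2 - x2*t1 + x3*t4 - x4*t3)"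
        define E3 where "E3 = - (x1*t3 - x2*t4 - x3*t1 + x4*t2)"
        define E4 where "E4 = - (x1*t4 + x2*t3 - x3*t2 - x4*t1)"
        have z1: "x1*y1+x2*y2+x3*y3+x4*y4 = M * E1"
        proof -
          have "x1*y1+x2*y2+x3*y3+x4*y4 = (x1^2 + x2^2 + x3^2 + x4^2) - M * (x1*t1 + x2*t2 + x3*t3 + x4*t4)"
            unfolding y1_def y2_def y3_def y4_def by (simp add: power2_eq_square algebra_simps)
          also have "\<dots> = M * E1" unfolding e[symmetric] E1_def by (simp add: algebra_simps)
          finally show ?thesis .
        qed
        have z2: "x1*y2-x2*y1+x3*y4-x4*y3 = M * E2"
          unfolding y1_def y2_def y3_def y4_def E2_def by (simp add: algebra_simps)
        have z3: "x1*y3-x2*y4-x3*y1+x4*y2 = M * E3"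
          unfolding y1_def y2_def y3_def y4_def E3_def by (simp add: algebra_simps)
        have z4: "x1*y4+x2*y3-x3*y2-x4*y1 = M * E4"
          unfolding y1_def y2_def y3_def y4_def E4_def by (simp add: algebra_simps)
        have "M * M * (Pp * r) = (M * Pp) * (M * r)" by (simp add: algebra_simps)
        also have "\<dots> = (x1^2 + x2^2 + x3^2 + x4^2) * (y1^2 + y2^2 + y3^2 + y4^2)" using e Sr by simp
        also have "\<dots> = (M * E1)^2 + (M * E2)^2 + (M * E3)^2 + (M * E4)^2"
          unfolding euler4 z1 z2 z3 z4 ..
        also have "\<dots> = M * M * (E1^2 + E2^2 + E3^2 + E4^2)" by (simp add: power2_eq_square algebra_simps)
        finally have "Pp * r = E1^2 + E2^2 + E3^2 + E4^2" using MK K1 by simp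
        hence "s4 (int (nat r) * int p)" using r0 unfolding s4_def Pp_def by (simp add: algebra_simps) blast
        hence "P (nat r)" using r0 False unfolding P_def by simp
        moreover have "nat r < m" using rM r0 unfolding M_def by simp
        ultimately show False using mmin by blast
      qed
    qed
  qed
  thus ?thesis using sm by simp
qed

lemma s4_all: "s4 (int n)"
proof (induction n rule: less_induct)
  case (less n)
  show ?case
  proof (cases "n \<le> 1")
    case True
    then consider "n = 0" | "n = 1" by linarith
    then show ?thesis
    proof cases
      case 1
      have "int n = 0^2 + 0^2 + 0^2 + 0^2" using 1 by simp
      then show ?thesis unfolding s4_def by blast
    next
      case 2
      have "int n = 1^2 + 0^2 + 0^2 + 0^2" using 2 by simp
      then show ?thesis unfolding s4_def by blast
    qed
  next
    case False
    hence "n \<noteq> 1" by simp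
    then obtain q where q: "prime q" "q dvd n" using prime_factor_nat by blast
    then obtain k where k: "n = q * k" unfolding dvd_def by blast
    have q1: "q > 1" using q prime_gt_1_nat by blast
    have kpos: "k > 0"
    proof (rule ccontr)
      assume "\<not> 0 < k"
      hence "n = 0" using k by simp
      thus False using False by simp
    qed
    have "1 * k < q * k" using q1 kpos by (metis mult_less_mono1)
    hence "k < n" using k by simp
    hence sk: "s4 (int k)" by (rule less.IH)
    have sq: "s4 (int q)"
    proof (cases "q = 2")
      case True
      have "int q = 1^2 + 1^2 + 0^2 + 0^2" using True by simp
      then show ?thesis unfolding s4_def by blast
    next
      case False
      hence "q > 2" using q1 by simp
      hence "odd q" using prime_odd_nat[OF q(1)] by simp
      then show ?thesis by (rule prime_s4[OF q(1)])
    qed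
    have "int n = int q * int k" using k by simp
    then show ?thesis using s4_mult[OF sq sk] by simp
  qed
qed

lemma lagrange_nat: "\<exists>a b c d :: nat. n = a^2 + b^2 + c^2 + d^2"
proof -
  obtain a b c d where e: "int n = a^2 + b^2 + c^2 + d^2" using s4_all[of n] unfolding s4_def by blast
  have "int n = int (nat \<bar>a\<bar> ^2 + nat \<bar>b\<bar> ^2 + nat \<bar>c\<bar> ^2 + nat \<bar>d\<bar> ^2)"
    unfolding e by simp
  thus ?thesis by (intro exI) (simp only: of_nat_eq_iff)
qed



definition DomF :: "nat \<Rightarrow> nat \<Rightarrow> nat \<Rightarrow> nat \<Rightarrow> gform" where
"DomF pa pb x F = GConj (gcomm (GVar x) (GVar pa))
  (GEx F (GEx (F+1) (GEx (F+2) (GEx (F+3) (GEx (F+4) (GEx (F+5) (GEx (F+6) (GEx (F+7)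
    (GConj (MulF pa pb F F (F+4) (F+8)) (GConj (MulF pa pb (F+1) (F+1) (F+5) (F+8))
     (GConj (MulF pa pb (F+2) (F+2) (F+6) (F+8)) (GConj (MulF pa pb (F+3) (F+3) (F+7) (F+8))
      (GEq (GVar x) (GMul (GMul (GMul (GVar (F+4)) (GVar (F+5))) (GVar (F+6))) (GVar (F+7))))))))))))))))"

lemma bexI': "x \<in> A \<Longrightarrow> P x \<Longrightarrow> \<exists>x\<in>A. P x" by blast

lemma sqS:
  assumes "x \<in> carrier wr_ZZ" "s \<in> carrier wr_ZZ" "MulS x x s"
  shows "\<exists>k. s = (\<lambda>_. 0, k * k)"
proof -
  have "s = (\<lambda>_. 0, snd x * snd x)" using MulS_sound[OF assms(1,1,2,3)] by simp
  thus ?thesis by (rule exI)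
qed

lemma DomS:
  assumes xc: "x \<in> carrier wr_ZZ"
  shows "(x \<cdot> wr_a = wr_a \<cdot> x \<and>
    (\<exists>x1\<in>carrier wr_ZZ. \<exists>x2\<in>carrier wr_ZZ. \<exists>x3\<in>carrier wr_ZZ. \<exists>x4\<in>carrier wr_ZZ.
     \<exists>s1\<in>carrier wr_ZZ. \<exists>s2\<in>carrier wr_ZZ. \<exists>s3\<in>carrier wr_ZZ. \<exists>s4\<in>carrier wr_ZZ.
     MulS x1 x1 s1 \<and> MulS x2 x2 s2 \<and> MulS x3 x3 s3 \<and> MulS x4 x4 s4 \<and> x = s1 \<cdot> s2 \<cdot> s3 \<cdot> s4))
   \<longleftrightarrow> x \<in> range enc"
proof
  assume "x \<cdot> wr_a = wr_a \<cdot> x \<and> (\<exists>x1\<in>carrier wr_ZZ. \<exists>x2\<in>carrier wr_ZZ. \<exists>x3\<in>carrier wr_ZZ. \<exists>x4\<in>carrier wr_ZZ.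
     \<exists>s1\<in>carrier wr_ZZ. \<exists>s2\<in>carrier wr_ZZ. \<exists>s3\<in>carrier wr_ZZ. \<exists>s4\<in>carrier wr_ZZ.
     MulS x1 x1 s1 \<and> MulS x2 x2 s2 \<and> MulS x3 x3 s3 \<and> MulS x4 x4 s4 \<and> x = s1 \<cdot> s2 \<cdot> s3 \<cdot> s4)"
  then obtain x1 x2 x3 x4 s1 s2 s3 s4 where e: "x = s1 \<cdot> s2 \<cdot> s3 \<cdot> s4" and
    m: "MulS x1 x1 s1" "MulS x2 x2 s2" "MulS x3 x3 s3" "MulS x4 x4 s4" and
    c: "x1 \<in> carrier wr_ZZ" "x2 \<in> carrier wr_ZZ" "x3 \<in> carrier wr_ZZ" "x4 \<in> carrier wr_ZZ"
     "s1 \<in> carrier wr_ZZ" "s2 \<in> carrier wr_ZZ" "s3 \<in> carrier wr_ZZ" "s4 \<in> carrier wr_ZZ"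
    apply - apply (elim conjE bexE) apply (rule that) apply assumption+ done
  from sqS[OF c(1) c(5) m(1)] obtain k1 where k1: "s1 = (\<lambda>_. 0, k1 * k1)" ..
  from sqS[OF c(2) c(6) m(2)] obtain k2 where k2: "s2 = (\<lambda>_. 0, k2 * k2)" ..
  from sqS[OF c(3) c(7) m(3)] obtain k3 where k3: "s3 = (\<lambda>_. 0, k3 * k3)" ..
  from sqS[OF c(4) c(8) m(4)] obtain k4 where k4: "s4 = (\<lambda>_. 0, k4 * k4)" ..
  have "x = (\<lambda>_. 0, k1 * k1 + k2 * k2 + k3 * k3 + k4 * k4)" using e k1 k2 k3 k4 by (simp add: gm)
  moreover have "k1 * k1 + k2 * k2 + k3 * k3 + k4 * k4 \<ge> 0"
    using zero_le_square[of k1] zero_le_square[of k2] zero_le_square[of k3] zero_le_square[of k4] by linarith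
  ultimately have "x = enc (nat (k1 * k1 + k2 * k2 + k3 * k3 + k4 * k4))" by (simp add: enc_def)
  thus "x \<in> range enc" by blast
next
  assume "x \<in> range enc"
  then obtain n where x: "x = enc n" by blast
  obtain c1 c2 c3 c4 :: nat where n: "n = c1^2 + c2^2 + c3^2 + c4^2" using lagrange_nat by blast
  have ms: "MulS (enc c) (enc c) (enc (c^2))" for c
    using MulS_complete[of "int c" c] by (simp add: enc_def power2_eq_square)
  have h: "MulS (enc c1) (enc c1) (enc (c1^2)) \<and> MulS (enc c2) (enc c2) (enc (c2^2)) \<and> MulS (enc c3) (enc c3) (enc (c3^2))
    \<and> MulS (enc c4) (enc c4) (enc (c4^2)) \<and> x = enc (c1^2) \<cdot> enc (c2^2) \<cdot> enc (c3^2) \<cdot> enc (c4^2)" unfolding x n by (simp add: enc_mul ms)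
  have xa: "x \<cdot> wr_a = wr_a \<cdot> x" unfolding x by (simp add: enc_def wa gm add.commute)
  show "x \<cdot> wr_a = wr_a \<cdot> x \<and> (\<exists>x1\<in>carrier wr_ZZ. \<exists>x2\<in>carrier wr_ZZ. \<exists>x3\<in>carrier wr_ZZ. \<exists>x4\<in>carrier wr_ZZ.
     \<exists>s1\<in>carrier wr_ZZ. \<exists>s2\<in>carrier wr_ZZ. \<exists>s3\<in>carrier wr_ZZ. \<exists>s4\<in>carrier wr_ZZ.
     MulS x1 x1 s1 \<and> MulS x2 x2 s2 \<and> MulS x3 x3 s3 \<and> MulS x4 x4 s4 \<and> x = s1 \<cdot> s2 \<cdot> s3 \<cdot> s4)"
    apply (rule conjI) apply (rule xa) apply (rule bexI'[OF enc_car])+ apply (rule h) done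
qed

lemma DomF_sem:
  assumes "x < F" "pa < F" "pb < F" "e pa = wr_a" "e pb = wr_b" "e x \<in> carrier wr_ZZ"
  shows "gsat (carrier wr_ZZ) (mult wr_ZZ) e (DomF pa pb x F) \<longleftrightarrow> e x \<in> range enc"
proof -
  have "gsat (carrier wr_ZZ) (mult wr_ZZ) e (DomF pa pb x F) \<longleftrightarrow> (e x \<cdot> wr_a = wr_a \<cdot> e x \<and>
    (\<exists>x1\<in>carrier wr_ZZ. \<exists>x2\<in>carrier wr_ZZ. \<exists>x3\<in>carrier wr_ZZ. \<exists>x4\<in>carrier wr_ZZ.
     \<exists>s1\<in>carrier wr_ZZ. \<exists>s2\<in>carrier wr_ZZ. \<exists>s3\<in>carrier wr_ZZ. \<exists>s4\<in>carrier wr_ZZ.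
     MulS x1 x1 s1 \<and> MulS x2 x2 s2 \<and> MulS x3 x3 s3 \<and> MulS x4 x4 s4 \<and> e x = s1 \<cdot> s2 \<cdot> s3 \<cdot> s4))"
    using assms by (simp add: DomF_def gcomm_def MulF_sem)
  also have "\<dots> \<longleftrightarrow> e x \<in> range enc" by (rule DomS[OF assms(6)])
  finally show ?thesis .
qed


fun bt :: "aterm \<Rightarrow> nat" where
  "bt (AVar i) = Suc i"
| "bt (APlus s t) = max (bt s) (bt t)"
| "bt (ATimes s t) = max (bt s) (bt t)"

fun bf :: "aform \<Rightarrow> nat" where
  "bf (AEq s t) = max (bt s) (bt t)"
| "bf (ANeg \<phi>) = bf \<phi>"
| "bf (AConj \<phi> \<psi>) = max (bf \<phi>) (bf \<psi>)"
| "bf (AEx i \<phi>) = max (Suc i) (bf \<phi>)"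

lemma aeval_cong: "(\<forall>i<bt t. e i = e' i) \<Longrightarrow> aeval e t = aeval e' t"
  by (induction t) auto

lemma asat_cong: "(\<forall>i<bf \<phi>. e i = e' i) \<Longrightarrow> asat e \<phi> = asat e' \<phi>"
proof (induction \<phi> arbitrary: e e')
  case (AEq s t)
  then show ?case using aeval_cong[of s e e'] aeval_cong[of t e e'] by auto
next
  case (AConj \<phi> \<psi>)
  have "asat e \<phi> = asat e' \<phi>" by (rule AConj.IH(1)) (use AConj.prems in auto)
  moreover have "asat e \<psi> = asat e' \<psi>" by (rule AConj.IH(2)) (use AConj.prems in auto)
  ultimately show ?case by simp
next
  case (AEx i \<phi>)
  have "asat (e(i := x)) \<phi> = asat (e'(i := x)) \<phi>" for x
    by (rule AEx.IH) (use AEx.prems in auto)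
  then show ?case by simp
qed auto

fun trt :: "nat \<Rightarrow> nat \<Rightarrow> aterm \<Rightarrow> nat \<Rightarrow> nat \<Rightarrow> gform" where
  "trt pa pb (AVar i) z F = GEq (GVar z) (GVar i)"
| "trt pa pb (APlus s t) z F = GEx F (GEx (Suc F) (GConj (trt pa pb s F (F+2))
     (GConj (trt pa pb t (Suc F) (F+2)) (GEq (GVar z) (GMul (GVar F) (GVar (Suc F)))))))"
| "trt pa pb (ATimes s t) z F = GEx F (GEx (Suc F) (GConj (trt pa pb s F (F+2))
     (GConj (trt pa pb t (Suc F) (F+2)) (MulF pa pb F (Suc F) z (F+2)))))"

abbreviation "CC \<equiv> carrier wr_ZZ"
abbreviation "MM \<equiv> monoid.mult wr_ZZ"

lemma trt_sem:
  assumes "\<forall>i<V. e i \<in> range enc" "e pa = wr_a" "e pb = wr_b" "bt t \<le> V" "V \<le> pa" "V \<le> pb"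
    "pa < F" "pb < F" "z < F" "e z \<in> CC"
  shows "gsat CC MM e (trt pa pb t z F) \<longleftrightarrow> e z = enc (aeval (\<lambda>i. dec (e i)) t)"
  using assms
proof (induction t arbitrary: e z F)
  case (AVar i)
  then have "i < V" by simp
  then obtain n where "e i = enc n" using AVar.prems by blast
  then show ?case by simp
next
  case (APlus s t)
  let ?A = "aeval (\<lambda>i. dec (e i)) s" and ?B = "aeval (\<lambda>i. dec (e i)) t"
  have Is: "gsat CC MM (e(F:=x1, Suc F:=x2)) (trt pa pb s F (F+2)) \<longleftrightarrow> x1 = enc ?A"
    if "x1 \<in> CC" "x2 \<in> CC" for x1 x2
  proof -
    have "gsat CC MM (e(F:=x1, Suc F:=x2)) (trt pa pb s F (F+2)) \<longleftrightarrow>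
      (e(F:=x1, Suc F:=x2)) F = enc (aeval (\<lambda>i. dec ((e(F:=x1, Suc F:=x2)) i)) s)"
      by (rule APlus.IH(1)) (use APlus.prems that in auto)
    moreover have "aeval (\<lambda>i. dec ((e(F:=x1, Suc F:=x2)) i)) s = ?A"
      by (rule aeval_cong) (use APlus.prems in auto)
    moreover have "(e(F:=x1, Suc F:=x2)) F = x1" "(e(F:=x1, Suc F:=x2)) (Suc F) = x2" by simp_all
    ultimately show ?thesis by metis
  qed
  have It: "gsat CC MM (e(F:=x1, Suc F:=x2)) (trt pa pb t (Suc F) (F+2)) \<longleftrightarrow> x2 = enc ?B"
    if "x1 \<in> CC" "x2 \<in> CC" for x1 x2
  proof -
    have "gsat CC MM (e(F:=x1, Suc F:=x2)) (trt pa pb t (Suc F) (F+2)) \<longleftrightarrow>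
      (e(F:=x1, Suc F:=x2)) (Suc F) = enc (aeval (\<lambda>i. dec ((e(F:=x1, Suc F:=x2)) i)) t)"
      by (rule APlus.IH(2)) (use APlus.prems that in auto)
    moreover have "aeval (\<lambda>i. dec ((e(F:=x1, Suc F:=x2)) i)) t = ?B"
      by (rule aeval_cong) (use APlus.prems in auto)
    moreover have "(e(F:=x1, Suc F:=x2)) F = x1" "(e(F:=x1, Suc F:=x2)) (Suc F) = x2" by simp_all
    ultimately show ?thesis by metis
  qed
  have "gsat CC MM e (trt pa pb (APlus s t) z F) \<longleftrightarrow>
     (\<exists>x1\<in>CC. \<exists>x2\<in>CC. gsat CC MM (e(F:=x1, Suc F:=x2)) (trt pa pb s F (F+2)) \<and>
        gsat CC MM (e(F:=x1, Suc F:=x2)) (trt pa pb t (Suc F) (F+2)) \<and> e z = MM x1 x2)"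
    using APlus.prems by simp
  also have "\<dots> \<longleftrightarrow> (\<exists>x1\<in>CC. \<exists>x2\<in>CC. x1 = enc ?A \<and> x2 = enc ?B \<and> e z = MM x1 x2)"
    by (intro bex_cong refl) (simp only: Is It)
  also have "\<dots> \<longleftrightarrow> e z = enc (?A + ?B)" by (auto simp: enc_mul)
  finally show ?case by simp
next
  case (ATimes s t)
  let ?A = "aeval (\<lambda>i. dec (e i)) s" and ?B = "aeval (\<lambda>i. dec (e i)) t"
  have Is: "gsat CC MM (e(F:=x1, Suc F:=x2)) (trt pa pb s F (F+2)) \<longleftrightarrow> x1 = enc ?A"
    if "x1 \<in> CC" "x2 \<in> CC" for x1 x2
  proof -
    have "gsat CC MM (e(F:=x1, Suc F:=x2)) (trt pa pb s F (F+2)) \<longleftrightarrow>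
      (e(F:=x1, Suc F:=x2)) F = enc (aeval (\<lambda>i. dec ((e(F:=x1, Suc F:=x2)) i)) s)"
      by (rule ATimes.IH(1)) (use ATimes.prems that in auto)
    moreover have "aeval (\<lambda>i. dec ((e(F:=x1, Suc F:=x2)) i)) s = ?A"
      by (rule aeval_cong) (use ATimes.prems in auto)
    moreover have "(e(F:=x1, Suc F:=x2)) F = x1" "(e(F:=x1, Suc F:=x2)) (Suc F) = x2" by simp_all
    ultimately show ?thesis by metis
  qed
  have It: "gsat CC MM (e(F:=x1, Suc F:=x2)) (trt pa pb t (Suc F) (F+2)) \<longleftrightarrow> x2 = enc ?B"
    if "x1 \<in> CC" "x2 \<in> CC" for x1 x2
  proof -
    have "gsat CC MM (e(F:=x1, Suc F:=x2)) (trt pa pb t (Suc F) (F+2)) \<longleftrightarrow>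
      (e(F:=x1, Suc F:=x2)) (Suc F) = enc (aeval (\<lambda>i. dec ((e(F:=x1, Suc F:=x2)) i)) t)"
      by (rule ATimes.IH(2)) (use ATimes.prems that in auto)
    moreover have "aeval (\<lambda>i. dec ((e(F:=x1, Suc F:=x2)) i)) t = ?B"
      by (rule aeval_cong) (use ATimes.prems in auto)
    moreover have "(e(F:=x1, Suc F:=x2)) F = x1" "(e(F:=x1, Suc F:=x2)) (Suc F) = x2" by simp_all
    ultimately show ?thesis by metis
  qed
  have Im: "gsat CC MM (e(F:=x1, Suc F:=x2)) (MulF pa pb F (Suc F) z (F+2)) \<longleftrightarrow> MulS x1 x2 (e z)" for x1 x2
    by (subst MulF_sem) (use ATimes.prems in auto)
  have "gsat CC MM e (trt pa pb (ATimes s t) z F) \<longleftrightarrow>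
     (\<exists>x1\<in>CC. \<exists>x2\<in>CC. gsat CC MM (e(F:=x1, Suc F:=x2)) (trt pa pb s F (F+2)) \<and>
        gsat CC MM (e(F:=x1, Suc F:=x2)) (trt pa pb t (Suc F) (F+2)) \<and>
        gsat CC MM (e(F:=x1, Suc F:=x2)) (MulF pa pb F (Suc F) z (F+2)))"
    by simp
  also have "\<dots> \<longleftrightarrow> (\<exists>x1\<in>CC. \<exists>x2\<in>CC. x1 = enc ?A \<and> x2 = enc ?B \<and> MulS x1 x2 (e z))"
    by (intro bex_cong refl) (simp only: Is It Im)
  also have "\<dots> \<longleftrightarrow> MulS (enc ?A) (enc ?B) (e z)" by auto
  also have "\<dots> \<longleftrightarrow> e z = enc (?A * ?B)"
  proof
    assume "MulS (enc ?A) (enc ?B) (e z)"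
    from MulS_sound[OF enc_car enc_car ATimes.prems(10) this] show "e z = enc (?A * ?B)"
      by (simp add: enc_def)
  next
    assume "e z = enc (?A * ?B)"
    then show "MulS (enc ?A) (enc ?B) (e z)" using MulS_complete[of "int ?A" ?B] by (simp add: enc_def)
  qed
  finally show ?case by simp
qed


fun trf :: "nat \<Rightarrow> nat \<Rightarrow> aform \<Rightarrow> nat \<Rightarrow> gform" where
  "trf pa pb (AEq s t) F = GEx F (GConj (trt pa pb s F (Suc F)) (trt pa pb t F (Suc F)))"
| "trf pa pb (ANeg \<phi>) F = GNeg (trf pa pb \<phi> F)"
| "trf pa pb (AConj \<phi> \<psi>) F = GConj (trf pa pb \<phi> F) (trf pa pb \<psi> F)"
| "trf pa pb (AEx i \<phi>) F = GEx i (GConj (DomF pa pb i F) (trf pa pb \<phi> F))"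

lemma trf_sem:
  assumes "\<forall>i<V. e i \<in> range enc" "e pa = wr_a" "e pb = wr_b" "bf \<phi> \<le> V" "V \<le> pa" "V \<le> pb"
    "pa < F" "pb < F"
  shows "gsat CC MM e (trf pa pb \<phi> F) \<longleftrightarrow> asat (\<lambda>i. dec (e i)) \<phi>"
  using assms
proof (induction \<phi> arbitrary: e)
  case (AEq s t)
  let ?A = "aeval (\<lambda>i. dec (e i)) s" and ?B = "aeval (\<lambda>i. dec (e i)) t"
  have Is: "gsat CC MM (e(F:=x)) (trt pa pb s F (Suc F)) \<longleftrightarrow> x = enc ?A" if "x \<in> CC" for x
  proof -
    have "gsat CC MM (e(F:=x)) (trt pa pb s F (Suc F)) \<longleftrightarrow>
      (e(F:=x)) F = enc (aeval (\<lambda>i. dec ((e(F:=x)) i)) s)"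
      by (rule trt_sem[where V=V]) (use AEq.prems that in auto)
    moreover have "aeval (\<lambda>i. dec ((e(F:=x)) i)) s = ?A"
      by (rule aeval_cong) (use AEq.prems in auto)
    moreover have "(e(F:=x)) F = x" by simp
    ultimately show ?thesis by metis
  qed
  have It: "gsat CC MM (e(F:=x)) (trt pa pb t F (Suc F)) \<longleftrightarrow> x = enc ?B" if "x \<in> CC" for x
  proof -
    have "gsat CC MM (e(F:=x)) (trt pa pb t F (Suc F)) \<longleftrightarrow>
      (e(F:=x)) F = enc (aeval (\<lambda>i. dec ((e(F:=x)) i)) t)"
      by (rule trt_sem[where V=V]) (use AEq.prems that in auto)
    moreover have "aeval (\<lambda>i. dec ((e(F:=x)) i)) t = ?B"
      by (rule aeval_cong) (use AEq.prems in auto)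
    moreover have "(e(F:=x)) F = x" by simp
    ultimately show ?thesis by metis
  qed
  have "gsat CC MM e (trf pa pb (AEq s t) F) \<longleftrightarrow>
     (\<exists>x\<in>CC. gsat CC MM (e(F:=x)) (trt pa pb s F (Suc F)) \<and> gsat CC MM (e(F:=x)) (trt pa pb t F (Suc F)))"
    by simp
  also have "\<dots> \<longleftrightarrow> (\<exists>x\<in>CC. x = enc ?A \<and> x = enc ?B)"
    by (intro bex_cong refl) (simp only: Is It)
  also have "\<dots> \<longleftrightarrow> ?A = ?B" by auto
  finally show ?case by simp
next
  case (ANeg \<phi>)
  then show ?case by simp
next
  case (AConj \<phi> \<psi>)
  have "gsat CC MM e (trf pa pb \<phi> F) \<longleftrightarrow> asat (\<lambda>i. dec (e i)) \<phi>"
    by (rule AConj.IH(1)) (use AConj.prems in auto)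
  moreover have "gsat CC MM e (trf pa pb \<psi> F) \<longleftrightarrow> asat (\<lambda>i. dec (e i)) \<psi>"
    by (rule AConj.IH(2)) (use AConj.prems in auto)
  ultimately show ?case by simp
next
  case (AEx i \<phi>)
  have iV: "i < V" using AEx.prems by simp
  have D: "gsat CC MM (e(i:=x)) (DomF pa pb i F) \<longleftrightarrow> x \<in> range enc" if "x \<in> CC" for x
  proof -
    have "gsat CC MM (e(i:=x)) (DomF pa pb i F) \<longleftrightarrow> (e(i:=x)) i \<in> range enc"
      by (rule DomF_sem) (use AEx.prems that iV in auto)
    thus ?thesis by simp
  qed
  have R: "gsat CC MM (e(i:=enc n)) (trf pa pb \<phi> F) \<longleftrightarrow> asat ((\<lambda>j. dec (e j))(i := n)) \<phi>" for n
  proof -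
    have "gsat CC MM (e(i:=enc n)) (trf pa pb \<phi> F) \<longleftrightarrow> asat (\<lambda>j. dec ((e(i:=enc n)) j)) \<phi>"
      by (rule AEx.IH) (use AEx.prems iV in auto)
    moreover have "(\<lambda>j. dec ((e(i:=enc n)) j)) = (\<lambda>j. dec (e j))(i := n)" by (auto simp: fun_eq_iff)
    ultimately show ?thesis by simp
  qed
  have "gsat CC MM e (trf pa pb (AEx i \<phi>) F) \<longleftrightarrow>
     (\<exists>x\<in>CC. gsat CC MM (e(i:=x)) (DomF pa pb i F) \<and> gsat CC MM (e(i:=x)) (trf pa pb \<phi> F))"
    by simp
  also have "\<dots> \<longleftrightarrow> (\<exists>x\<in>CC. x \<in> range enc \<and> gsat CC MM (e(i:=x)) (trf pa pb \<phi> F))"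
    by (intro bex_cong refl) (simp only: D)
  also have "\<dots> \<longleftrightarrow> (\<exists>n. gsat CC MM (e(i:=enc n)) (trf pa pb \<phi> F))"
    using enc_car by blast
  also have "\<dots> \<longleftrightarrow> (\<exists>n. asat ((\<lambda>j. dec (e j))(i := n)) \<phi>)" by (simp only: R)
  finally show ?case by simp
qed


fun doms :: "nat \<Rightarrow> nat \<Rightarrow> nat \<Rightarrow> nat \<Rightarrow> gform" where
  "doms pa pb F 0 = GEq (GVar 0) (GVar 0)"
| "doms pa pb F (Suc j) = GConj (doms pa pb F j) (DomF pa pb j F)"

lemma doms_sem:
  assumes "\<forall>i<j. e i \<in> CC" "j \<le> V" "V \<le> pa" "V \<le> pb" "pa < F" "pb < F" "e pa = wr_a" "e pb = wr_b"
  shows "gsat CC MM e (doms pa pb F j) \<longleftrightarrow> (\<forall>i<j. e i \<in> range enc)"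
  using assms
proof (induction j)
  case 0 then show ?case by simp
next
  case (Suc j)
  have "gsat CC MM e (DomF pa pb j F) \<longleftrightarrow> e j \<in> range enc"
    by (rule DomF_sem) (use Suc.prems in auto)
  moreover have "gsat CC MM e (doms pa pb F j) \<longleftrightarrow> (\<forall>i<j. e i \<in> range enc)"
    by (rule Suc.IH) (use Suc.prems in auto)
  ultimately show ?case by (auto simp: less_Suc_eq)
qed

lemma concat_single: "(\<forall>ys\<in>set yss. length ys = 1) \<Longrightarrow> concat yss = map hd yss"
proof (induction yss)
  case (Cons ys yss)
  then obtain y where "ys = [y]" by (cases ys) auto
  then show ?case using Cons by simp
qed simp

lemma concat_map_single: "concat (map (\<lambda>x. [x]) xs) = xs"
  by (induction xs) auto

theorem main:
  shows "interprets_arith_params (carrier wr_ZZ) MM 1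
           {[wr_a [^]\<^bsub>wr_ZZ\<^esub> (n::nat)] | n. True}
           (\<lambda>xs. THE n::nat. xs = [wr_a [^]\<^bsub>wr_ZZ\<^esub> n])"
proof -
  define D where "D = {[wr_a [^]\<^bsub>wr_ZZ\<^esub> (n::nat)] | n. True}"
  define f where "f = (\<lambda>xs. THE n::nat. xs = [wr_a [^]\<^bsub>wr_ZZ\<^esub> n])"
  have D: "D = {[enc n] | n. True}" unfolding D_def apow ..
  have fenc: "f [enc n] = n" for n unfolding f_def apow by auto
  have Dmem: "ys \<in> D \<longleftrightarrow> (\<exists>x. ys = [x] \<and> x \<in> range enc)" for ys unfolding D by blast
  have part1: "D \<subseteq> {xs. length xs = 1 \<and> set xs \<subseteq> CC}" unfolding D by auto
  have part2: "f ` D = UNIV"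
  proof -
    have "n \<in> f ` D" for n
    proof
      show "[enc n] \<in> D" unfolding D by blast
    qed (simp add: fenc)
    thus ?thesis by blast
  qed
  have part3: "group_definable_params CC MM (1 * k)
          {concat yss | yss. length yss = k \<and> set yss \<subseteq> D \<and> map f yss \<in> X}"
    if ad: "arith_definable k X" for k X
  proof -
    obtain \<phi> where X: "X = {xs. length xs = k \<and> asat (\<lambda>i. if i < k then xs ! i else 0) \<phi>}"
      using ad unfolding arith_definable_def by blast
    define V where "V = max k (bf \<phi>)"
    define pa where "pa = V"
    define pb where "pb = Suc V"
    define F where "F = V + 2"
    define p where "p i = (if i = V then wr_a else if i = Suc V then wr_b else enc 0)" for i
    define \<psi> where "\<psi> = GConj (doms pa pb F k) (trf pa pb \<phi> F)"
    define E where "E xs = (\<lambda>i. if i < k then xs ! i else p i)" for xs :: "((int \<Rightarrow> int) \<times> int) list"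
    have pc: "range p \<subseteq> CC"
      unfolding p_def by (auto simp: wa wb gcar fin_d0)
    have Epa: "E xs pa = wr_a" "E xs pb = wr_b" for xs
      unfolding E_def p_def pa_def pb_def V_def by auto
    define Z where "Z = {xs. length xs = k \<and> (\<forall>i<k. xs ! i \<in> range enc) \<and>
         asat (\<lambda>i. if i < k then dec (xs ! i) else 0) \<phi>}"
    have sem: "gsat CC MM (E xs) (trf pa pb \<phi> F) \<longleftrightarrow> asat (\<lambda>i. if i < k then dec (xs ! i) else 0) \<phi>"
      if "\<forall>i<k. xs ! i \<in> range enc" for xs
    proof -
      have "gsat CC MM (E xs) (trf pa pb \<phi> F) \<longleftrightarrow> asat (\<lambda>i. dec (E xs i)) \<phi>"
      proof (rule trf_sem[where V=V])
        show "\<forall>i<V. E xs i \<in> range enc" using that unfolding E_def p_def by auto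
      qed (use Epa in \<open>auto simp: V_def pa_def pb_def F_def\<close>)
      also have "\<dots> \<longleftrightarrow> asat (\<lambda>i. if i < k then dec (xs ! i) else 0) \<phi>"
        by (rule asat_cong) (auto simp: E_def p_def V_def)
      finally show ?thesis .
    qed
    have dsem: "gsat CC MM (E xs) (doms pa pb F k) \<longleftrightarrow> (\<forall>i<k. xs ! i \<in> range enc)"
      if "set xs \<subseteq> CC" "length xs = k" for xs
    proof -
      have "gsat CC MM (E xs) (doms pa pb F k) \<longleftrightarrow> (\<forall>i<k. E xs i \<in> range enc)"
        by (rule doms_sem[where V=V]) (use that Epa in \<open>auto simp: E_def V_def pa_def pb_def F_def\<close>)
      thus ?thesis by (simp add: E_def)
    qed
    have R: "{xs. length xs = 1 * k \<and> set xs \<subseteq> CC \<and>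
          gsat CC MM (\<lambda>i. if i < 1 * k then xs ! i else p i) \<psi>} = Z"
    proof (rule Set.set_eqI, rule iffI)
      fix xs assume "xs \<in> {xs. length xs = 1 * k \<and> set xs \<subseteq> CC \<and>
          gsat CC MM (\<lambda>i. if i < 1 * k then xs ! i else p i) \<psi>}"
      hence xs: "length xs = k" "set xs \<subseteq> CC" "gsat CC MM (E xs) \<psi>" by (auto simp: E_def[abs_def])
      have r: "\<forall>i<k. xs ! i \<in> range enc" using xs dsem unfolding \<psi>_def by simp
      show "xs \<in> Z" using xs r sem[OF r] unfolding Z_def \<psi>_def by simp
    next
      fix xs assume "xs \<in> Z"
      hence xs: "length xs = k" "\<forall>i<k. xs ! i \<in> range enc" "asat (\<lambda>i. if i < k then dec (xs ! i) else 0) \<phi>"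
        unfolding Z_def by auto
      have re: "\<forall>x\<in>set xs. x \<in> range enc" using xs by (metis in_set_conv_nth)
      have sc: "set xs \<subseteq> CC"
      proof
        fix x assume "x \<in> set xs"
        then obtain n where "x = enc n" using re by blast
        then show "x \<in> CC" by simp
      qed
      have "gsat CC MM (E xs) \<psi>" unfolding \<psi>_def using dsem[OF sc xs(1)] sem[OF xs(2)] xs by simp
      thus "xs \<in> {xs. length xs = 1 * k \<and> set xs \<subseteq> CC \<and>
          gsat CC MM (\<lambda>i. if i < 1 * k then xs ! i else p i) \<psi>}" using xs sc by (simp add: E_def[abs_def])
    qed
    have L: "{concat yss | yss. length yss = k \<and> set yss \<subseteq> D \<and> map f yss \<in> X} = Z"
    proof (rule Set.set_eqI, rule iffI)
      fix xs assume "xs \<in> {concat yss | yss. length yss = k \<and> set yss \<subseteq> D \<and> map f yss \<in> X}"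
      then obtain yss where y: "xs = concat yss" "length yss = k" "set yss \<subseteq> D" "map f yss \<in> X" by blast
      have one: "\<forall>ys\<in>set yss. length ys = 1"
      proof
        fix ys assume "ys \<in> set yss"
        hence "ys \<in> D" using y(3) by blast
        then obtain x where "ys = [x]" using Dmem by blast
        thus "length ys = 1" by simp
      qed
      have xs: "xs = map hd yss" using concat_single[OF one] y(1) by simp
      have yi: "\<exists>n. yss ! i = [enc n]" if ik: "i < k" for i
      proof -
        have "yss ! i \<in> D" using y(2,3) ik nth_mem by blast
        then obtain x where x: "yss ! i = [x]" "x \<in> range enc" using Dmem by blast
        then obtain n where "x = enc n" by blast
        thus ?thesis using x by blast
      qed
      have xi: "xs ! i = hd (yss ! i)" if "i < k" for i using xs y(2) that by simp
      have r: "\<forall>i<k. xs ! i \<in> range enc"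
      proof (intro allI impI)
        fix i assume ik: "i < k"
        then obtain n where "yss ! i = [enc n]" using yi by blast
        thus "xs ! i \<in> range enc" using xi[OF ik] by simp
      qed
      have fe: "f (yss ! i) = dec (xs ! i)" if ik: "i < k" for i
      proof -
        obtain n where "yss ! i = [enc n]" using yi ik by blast
        thus ?thesis using xi[OF ik] fenc by simp
      qed
      have "asat (\<lambda>i. if i < k then map f yss ! i else 0) \<phi>" using y(4) X by simp
      moreover have "(\<lambda>i. if i < k then map f yss ! i else 0) = (\<lambda>i. if i < k then dec (xs ! i) else 0)"
        using fe y(2) by (simp add: fun_eq_iff)
      ultimately have A: "asat (\<lambda>i. if i < k then dec (xs ! i) else 0) \<phi>" by metis
      have lx: "length xs = k" using xs y(2) by simp
      show "xs \<in> Z" unfolding Z_def using r A lx by blast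
    next
      fix xs assume "xs \<in> Z"
      hence xs: "length xs = k" "\<forall>i<k. xs ! i \<in> range enc" "asat (\<lambda>i. if i < k then dec (xs ! i) else 0) \<phi>"
        unfolding Z_def by auto
      define yss where "yss = map (\<lambda>x. [x]) xs"
      have "set yss \<subseteq> D"
      proof
        fix ys assume "ys \<in> set yss"
        then obtain x where x: "x \<in> set xs" "ys = [x]" unfolding yss_def by auto
        have "x \<in> range enc" using xs(1,2) x(1) by (metis in_set_conv_nth)
        thus "ys \<in> D" using Dmem x(2) by blast
      qed
      moreover have "length yss = k" using xs unfolding yss_def by simp
      moreover have "map f yss \<in> X"
      proof -
        have "(\<lambda>i. if i < k then map f yss ! i else 0) = (\<lambda>i. if i < k then dec (xs ! i) else 0)"
        proof
          fix i show "(if i < k then map f yss ! i else 0) = (if i < k then dec (xs ! i) else 0)"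
          proof (cases "i < k")
            case True
            then obtain n where "xs ! i = enc n" using xs by blast
            then show ?thesis using True xs(1) fenc unfolding yss_def by simp
          qed simp
        qed
        thus ?thesis unfolding X using xs \<open>length yss = k\<close> by simp
      qed
      moreover have "xs = concat yss" unfolding yss_def by (rule concat_map_single[symmetric])
      ultimately show "xs \<in> {concat yss | yss. length yss = k \<and> set yss \<subseteq> D \<and> map f yss \<in> X}"
        by blast
    qed
    show ?thesis unfolding group_definable_params_def
      by (intro exI[of _ \<psi>] exI[of _ p] conjI pc) (rule trans[OF L R[symmetric]])
  qed
  have "interprets_arith_params CC MM 1 D f" unfolding interprets_arith_params_def
    using part1 part2 part3 by blast
  thus ?thesis unfolding D_def f_def .
qed


theorem lemma5p1:
  shows "interprets_arith_params (carrier wr_ZZ) (mult wr_ZZ) 1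
           {[wr_a [^]\<^bsub>wr_ZZ\<^esub> (n::nat)] | n. True}
           (\<lambda>xs. THE n::nat. xs = [wr_a [^]\<^bsub>wr_ZZ\<^esub> n])"
  by (rule main)

end
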